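(* Let $k$ be a positive integer, $a=6k+4$, $t=\frac{a-2}{2}$, $b=a+1$, $c=a+\frac a2$, $S=\{a,b,c\}$, $G=\langle S\rangle$. Let $A_{0,k}=\{0\}$, $B_{0,k}=\emptyset$, and for $i\in[1,t]$ let $A_{i,k}=[ia,\,ia+i]$ and $B_{i,k}=A_{i-1,k}+\{c\}$. Let $C=[(t+1)a,\infty[$ and $H_{11,k}=\bigcup_{i=0}^{t}(A_{i,k}\cup B_{i,k})\cup C$. Then: (1) $x\in G$ if and only if $x=(q+u)a+u\cdot\frac a2+r$ for some $q,r,u\in\mathbb{N}$ with $0\le r\le q$; (2) $G=H_{11,k}$; (3) $A_{i,k}<B_{i,k}$ for $i\in[0,t]$; $B_{i,k}<A_{i+1,k}$ for $i\in[0,t-1]$; $B_{t,k}<C$; (4) $H_{11,k}$ is a $3$-permutation numerical semigroup.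
   Context: $\mathbb{N}=\{0,1,2,\dots\}$. A numerical semigroup is a submonoid $G$ of $(\mathbb{N},+,0)$ with $\mathbb{N}\setminus G$ finite; $\langle S\rangle$ is the submonoid generated by $S$. Writing the elements of a numerical semigroup as $0=g_0<g_1<g_2<\cdots$, it is an $n$-permutation numerical semigroup if it is generated by $\{g_1,\dots,g_n\}$ and for every $k\in\mathbb{N}$ the tuple $(g_{kn+1}\bmod n,\dots,g_{kn+n}\bmod n)$ contains exactly one representative of each residue class mod $n$. Notation: $[u,v]=\{x\in\mathbb{N}:u\le x\le v\}$, $[u,\infty[=\{x\in\mathbb{N}:x\ge u\}$; $X+Y=\{x+y:x\in X,y\in Y\}$; $X<Y$ means $x<y$ for all $x\in X,y\in Y$ (vacuous if one of them is empty). *)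

theory Defs
  imports "HOL-Library.Infinite_Set"
begin

inductive_set gen :: "nat set \<Rightarrow> nat set" for S :: "nat set" where
  gen_zero: "0 \<in> gen S"
| gen_add: "x \<in> gen S \<Longrightarrow> s \<in> S \<Longrightarrow> x + s \<in> gen S"

definition numerical_semigroup :: "nat set \<Rightarrow> bool" where
  "numerical_semigroup G \<longleftrightarrow> 0 \<in> G \<and> (\<forall>x\<in>G. \<forall>y\<in>G. x + y \<in> G) \<and> finite (UNIV - G)"

text \<open>g_i = i-th element (0-indexed, g_0 = 0) of G in increasing order.\<close>
definition elem :: "nat set \<Rightarrow> nat \<Rightarrow> nat" where
  "elem G i = Infinite_Set.enumerate G i"

definition perm_ns :: "nat \<Rightarrow> nat set \<Rightarrow> bool" where
  "perm_ns n G \<longleftrightarrow> numerical_semigroup G \<and> G = gen (elem G ` {1..n}) \<and>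
     (\<forall>k. bij_betw (\<lambda>j. elem G (k*n + j) mod n) {1..n} {..<n})"

definition setplus :: "nat set \<Rightarrow> nat set \<Rightarrow> nat set" where
  "setplus X Y = {x + y | x y. x \<in> X \<and> y \<in> Y}"

definition set_less :: "nat set \<Rightarrow> nat set \<Rightarrow> bool" where
  "set_less X Y \<longleftrightarrow> (\<forall>x\<in>X. \<forall>y\<in>Y. x < y)"

definition aa :: "nat \<Rightarrow> nat" where "aa k = 6*k + 4"
definition tt :: "nat \<Rightarrow> nat" where "tt k = (aa k - 2) div 2"
definition cc :: "nat \<Rightarrow> nat" where "cc k = aa k + aa k div 2"

fun A :: "nat \<Rightarrow> nat \<Rightarrow> nat set" where
  "A k 0 = {0}"
| "A k (Suc j) = {Suc j * aa k .. Suc j * aa k + Suc j}"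

fun B :: "nat \<Rightarrow> nat \<Rightarrow> nat set" where
  "B k 0 = {}"
| "B k (Suc j) = setplus (A k j) {cc k}"

definition C :: "nat \<Rightarrow> nat set" where
  "C k = {(tt k + 1) * aa k ..}"

definition H11 :: "nat \<Rightarrow> nat set" where
  "H11 k = (\<Union>i\<in>{0..tt k}. A k i \<union> B k i) \<union> C k"

end

theory Submission
  imports Defs "HOL-Library.Discrete_Functions"
begin

lemma gen_mult: "x \<in> gen S \<Longrightarrow> s \<in> S \<Longrightarrow> x + n*s \<in> gen S"
proof (induction n arbitrary: x)
  case 0 then show ?case by simp
next
  case (Suc n)
  have "x + s \<in> gen S" using Suc.prems by (rule gen.gen_add)
  from Suc.IH[OF this Suc.prems(2)] show ?case by (simp add: algebra_simps)
qed

lemma gen_closed: "y \<in> gen S \<Longrightarrow> x \<in> gen S \<Longrightarrow> x + y \<in> gen S"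
proof (induction y rule: gen.induct)
  case gen_zero then show ?case by simp
next
  case (gen_add y s)
  have "(x + y) + s \<in> gen S" using gen.gen_add[OF gen_add.IH[OF gen_add.prems] gen_add.hyps(2)] .
  then show ?case by (simp add: add.assoc)
qed

lemma gen3: "x \<in> gen {a,b,c} \<longleftrightarrow> (\<exists>m n u. x = m*a+n*b+u*(c::nat))"
proof
  assume "x \<in> gen {a,b,c}"
  then show "\<exists>m n u. x = m*a+n*b+u*c"
  proof (induction x rule: gen.induct)
    case gen_zero then show ?case by (intro exI[of _ 0]) simp
  next
    case (gen_add x s)
    then obtain m n u where x: "x = m*a+n*b+u*c" by blast
    from gen_add.hyps(2) show ?case
    proof (elim insertE)
      assume "s = a" then show ?thesis using x by (intro exI[of _ "Suc m"] exI[of _ n] exI[of _ u]) simp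
    next
      assume "s = b" then show ?thesis using x by (intro exI[of _ m] exI[of _ "Suc n"] exI[of _ u]) simp
    next
      assume "s = c" then show ?thesis using x by (intro exI[of _ m] exI[of _ n] exI[of _ "Suc u"]) simp
    qed simp
  qed
next
  assume "\<exists>m n u. x = m*a+n*b+u*c"
  then obtain m n u where x: "x = m*a+n*b+u*c" by blast
  have "0 + m*a \<in> gen {a,b,c}" by (rule gen_mult) (auto intro: gen.gen_zero)
  then have "0 + m*a + n*b \<in> gen {a,b,c}" by (rule gen_mult) auto
  then have "0 + m*a + n*b + u*c \<in> gen {a,b,c}" by (rule gen_mult) auto
  then show "x \<in> gen {a,b,c}" using x by simp
qed

definition inH :: "nat \<Rightarrow> nat \<Rightarrow> bool" where
  "inH h x \<longleftrightarrow> (\<exists>i j. i<h \<and> j\<le>i \<and> x = 2*h*i+j) \<or> (\<exists>i j. 0<i \<and> i<h \<and> j<i \<and> x = 2*h*(i-1)+3*h+j) \<or> 2*h*h \<le> x"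

lemma qru_inH:
  assumes h: "h \<ge> 1"
  shows "(\<exists>q r u. r \<le> q \<and> x = (q+u)*(2*h) + u*h + r) \<longleftrightarrow> inH h x"
proof
  assume "\<exists>q r u. r \<le> q \<and> x = (q+u)*(2*h) + u*h + r"
  then obtain q r u where r: "r \<le> q" and x: "x = (q+u)*(2*h) + u*h + r" by blast
  obtain v where "u = 2*v \<or> u = 2*v+1" by (metis oddE evenE)
  then show "inH h x"
  proof
    assume u: "u = 2*v"
    have x': "x = 2*h*(q+3*v) + r" using x u by (simp add: algebra_simps)
    show ?thesis
    proof (cases "q+3*v < h")
      case True then show ?thesis unfolding inH_def using x' r by (intro disjI1 exI[of _ "q+3*v"] exI[of _ r]) auto
    next
      case False
      then have hh: "2*h*h \<le> 2*h*(q+3*v)" by simp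
      have "2*h*h \<le> x" using x' hh by linarith
      then show ?thesis unfolding inH_def by blast
    qed
  next
    assume u: "u = 2*v+1"
    have x': "x = 2*h*(q+3*v) + 3*h + r" using x u by (simp add: algebra_simps)
    show ?thesis
    proof (cases "q+3*v+1 < h")
      case True then show ?thesis unfolding inH_def using x' r
        by (intro disjI2 disjI1 exI[of _ "q+3*v+1"] exI[of _ r]) auto
    next
      case False
      then have "h-1 \<le> q+3*v" by simp
      then have h1: "2*h*(h-1) \<le> 2*h*(q+3*v)" by (rule mult_left_mono) simp
      have h2: "2*h*(h-1) + 2*h = 2*h*h" using h by (cases h) (auto simp: algebra_simps)
      have "2*h*h \<le> x" using x' h1 h2 by linarith
      then show ?thesis unfolding inH_def by blast
    qed
  qed
next
  assume "inH h x"
  then consider (A) i j where "i<h" "j\<le>i" "x = 2*h*i+j"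
    | (B) i j where "0<i" "i<h" "j<i" "x = 2*h*(i-1)+3*h+j" | (C) "2*h*h \<le> x"
    unfolding inH_def by blast
  then show "\<exists>q r u. r \<le> q \<and> x = (q+u)*(2*h) + u*h + r"
  proof cases
    case A then show ?thesis by (intro exI[of _ i] exI[of _ j] exI[of _ 0]) (auto simp: algebra_simps)
  next
    case B
    then obtain p where p: "i = Suc p" by (cases i) auto
    show ?thesis using B p by (intro exI[of _ p] exI[of _ j] exI[of _ 1]) (auto simp: algebra_simps)
  next
    case C
    define Q where "Q = x div (2*h)"
    define s where "s = x mod (2*h)"
    have xs: "x = Q*(2*h) + s" unfolding Q_def s_def by (rule div_mult_mod_eq[symmetric])
    have s: "s < 2*h" unfolding s_def using h by simp
    have Q: "h \<le> Q"
    proof (rule ccontr)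
      assume "\<not> h \<le> Q"
      then have "Q + 1 \<le> h" by simp
      then have "(Q+1)*(2*h) \<le> h*(2*h)" by (rule mult_right_mono) simp
      then show False using xs s C by (simp add: algebra_simps)
    qed
    show ?thesis
    proof (cases "s \<le> Q")
      case True then show ?thesis using xs by (intro exI[of _ Q] exI[of _ s] exI[of _ 0]) auto
    next
      case False
      then obtain p where p: "Q = Suc p" using Q h by (cases Q) auto
      show ?thesis using xs False s Q p
        by (intro exI[of _ p] exI[of _ "s - h"] exI[of _ 1]) (auto simp: algebra_simps)
    qed
  qed
qed

definition gf :: "nat \<Rightarrow> nat \<Rightarrow> nat" where
  "gf h n = (if h*h \<le> n then 2*h*h + (n - h*h) else (let i = floor_sqrt n in
     if n \<le> i*i+i then 2*h*i + (n - i*i) else 2*h*(i-1) + 3*h + (n - i*i - i - 1)))"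

lemma sq_less: "(i::nat) < h \<Longrightarrow> (i+1)*(i+1) \<le> h*h"
  using mult_le_mono[of "i+1" h "i+1" h] by simp

lemma gfA: assumes "i < h" "j \<le> i" shows "gf h (i*i+j) = 2*h*i+j"
proof -
  have "(i+1)*(i+1) \<le> h*h" using sq_less assms(1) .
  then have n: "\<not> h*h \<le> i*i+j" using assms(2) by (simp add: algebra_simps)
  have "floor_sqrt (i*i+j) = i" by (rule floor_sqrt_unique) (use assms(2) in \<open>auto simp: power2_eq_square algebra_simps\<close>)
  then show ?thesis using n assms(2) unfolding gf_def by (simp add: Let_def)
qed

lemma gfB: assumes "0 < i" "i < h" "j < i" shows "gf h (i*i+i+1+j) = 2*h*(i-1)+3*h+j"
proof -
  have "(i+1)*(i+1) \<le> h*h" using sq_less assms(2) .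
  then have n: "\<not> h*h \<le> i*i+i+1+j" using assms(3) by (simp add: algebra_simps)
  have "floor_sqrt (i*i+i+1+j) = i" by (rule floor_sqrt_unique) (use assms(3) in \<open>auto simp: power2_eq_square algebra_simps\<close>)
  then show ?thesis using n assms(3) unfolding gf_def by (simp add: Let_def)
qed

lemma gfC: "gf h (h*h+j) = 2*h*h+j"
  unfolding gf_def by simp

lemma decomp: fixes h n :: nat shows
  "h*h \<le> n \<or> (\<exists>i j. i<h \<and> j\<le>i \<and> n = i*i+j) \<or> (\<exists>i j. 0<i \<and> i<h \<and> j<i \<and> n = i*i+i+1+j)"
proof (cases "h*h \<le> n")
  case False
  define i where "i = floor_sqrt n"
  have i1: "i*i \<le> n" unfolding i_def using floor_sqrt_power2_le[of n] by (simp add: power2_eq_square)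
  have i2: "n < (i+1)*(i+1)" unfolding i_def using Suc_floor_sqrt_power2_gt[of n] by (simp add: power2_eq_square)
  have ih: "i < h"
  proof (rule ccontr)
    assume "\<not> i < h"
    then have "h*h \<le> i*i" using mult_le_mono by simp
    then show False using i1 False by simp
  qed
  show ?thesis
  proof (cases "n \<le> i*i+i")
    case True then show ?thesis using ih i1 by (intro disjI2 disjI1 exI[of _ i] exI[of _ "n - i*i"]) auto
  next
    case F2: False
    then have "0 < i" using i2 by (cases i) auto
    then show ?thesis using ih i1 i2 F2 by (intro disjI2 disjI2 exI[of _ i] exI[of _ "n - i*i - i - 1"]) (auto simp: algebra_simps)
  qed
qed simp

lemma m31: "(3*(X::nat)+1) mod 3 = 1" by presburger
lemma m30: "(3*(X::nat)) mod 3 = 0" by presburger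

lemma mod3_lemma: "((i::nat)*i+i+1) mod 3 \<noteq> 1 \<Longrightarrow> i mod 3 = 1"
proof -
  assume H: "(i*i+i+1) mod 3 \<noteq> 1"
  have "\<exists>q. i = 3*q \<or> i = 3*q+1 \<or> i = 3*q+2" by presburger
  then obtain q where "i = 3*q \<or> i = 3*q+1 \<or> i = 3*q+2" by blast
  then show ?thesis
  proof (elim disjE)
    assume "i = 3*q" then have e: "i*i+i+1 = 3*(3*q*q+q)+1" by (simp add: algebra_simps)
    have "(i*i+i+1) mod 3 = 1" by (simp only: e m31)
    with H show ?thesis by simp
  next
    assume "i = 3*q+2" then have e: "i*i+i+1 = 3*(3*q*q+5*q+2)+1" by (simp add: algebra_simps)
    have "(i*i+i+1) mod 3 = 1" by (simp only: e m31)
    with H show ?thesis by simp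
  qed simp
qed

lemma mod3_lemma2: "((i::nat)*i) mod 3 \<noteq> 1 \<Longrightarrow> i mod 3 = 0"
proof -
  assume H: "(i*i) mod 3 \<noteq> 1"
  have "\<exists>q. i = 3*q \<or> i = 3*q+1 \<or> i = 3*q+2" by presburger
  then obtain q where "i = 3*q \<or> i = 3*q+1 \<or> i = 3*q+2" by blast
  then show ?thesis
  proof (elim disjE)
    assume "i = 3*q+1" then have e: "i*i = 3*(3*q*q+2*q)+1" by (simp add: algebra_simps)
    have "(i*i) mod 3 = 1" by (simp only: e m31)
    with H show ?thesis by simp
  next
    assume "i = 3*q+2" then have e: "i*i = 3*(3*q*q+4*q+1)+1" by (simp add: algebra_simps)
    have "(i*i) mod 3 = 1" by (simp only: e m31)
    with H show ?thesis by simp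
  qed simp
qed

lemma step:
  assumes h: "h mod 3 = 2"
  shows "gf h n < gf h (Suc n) \<and> (Suc n mod 3 \<noteq> 1 \<longrightarrow> gf h (Suc n) mod 3 = Suc (gf h n) mod 3)"
proof -
  have "\<exists>kk. h = 3*kk+2" using h by presburger
  then obtain kk where hk: "h = 3*kk+2" by blast
  consider (C) "h*h \<le> n" | (A) i j where "i<h" "j\<le>i" "n = i*i+j"
    | (B) i j where "0<i" "i<h" "j<i" "n = i*i+i+1+j" using decomp[of h n] by blast
  then show ?thesis
  proof cases
    case C
    then show ?thesis unfolding gf_def by auto
  next
    case A
    show ?thesis
    proof (cases "j < i")
      case True
      have "Suc n = i*i + Suc j" using A by simp
      then show ?thesis using gfA[OF A(1) A(2)] gfA[OF A(1), of "Suc j"] True A(3) by simp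
    next
      case False
      then have ji: "j = i" using A by simp
      show ?thesis
      proof (cases "i = 0")
        case True
        then have "n = 0" "Suc n = 1*1+0" using A ji by auto
        moreover have "1 < h" using hk by simp
        ultimately show ?thesis using gfA[of 1 h 0] gfA[of 0 h 0] by auto
      next
        case False
        then obtain p where p: "i = Suc p" by (cases i) auto
        have sn: "Suc n = i*i+i+1+0" using A ji by simp
        have g1: "gf h n = 2*h*i+i" using gfA[OF A(1) A(2)] A(3) ji by simp
        have g2: "gf h (Suc n) = 2*h*p+3*h" using gfB[of i h 0] A(1) sn p by simp
        have lt: "gf h n < gf h (Suc n)" using g1 g2 p A(1) by (simp add: algebra_simps)
        have "Suc n mod 3 \<noteq> 1 \<longrightarrow> gf h (Suc n) mod 3 = Suc (gf h n) mod 3"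
        proof
          assume N: "Suc n mod 3 \<noteq> 1"
          have "i mod 3 = 1" using mod3_lemma[OF N[unfolded sn add_0_right]] .
          then have "\<exists>q. i = 3*q+1" by presburger
          then obtain q where q: "i = 3*q+1" by blast
          have e1: "gf h (Suc n) = 3*(2*h*q + h)" using g2 q p by simp
          have e2: "Suc (gf h n) = 3*(6*kk*q + 2*kk + 5*q + 2)" using g1 q hk by (simp add: algebra_simps)
          show "gf h (Suc n) mod 3 = Suc (gf h n) mod 3" by (simp only: e1 e2 m30)
        qed
        with lt show ?thesis by blast
      qed
    qed
  next
    case B
    show ?thesis
    proof (cases "Suc j < i")
      case True
      have "Suc n = i*i+i+1 + Suc j" using B by simp
      then show ?thesis using gfB[OF B(1) B(2) B(3)] gfB[OF B(1) B(2) True] True B(4) by simp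
    next
      case False
      then have ji: "i = Suc j" using B by simp
      have sn: "Suc n = (i+1)*(i+1)" using B(4) ji by (simp add: algebra_simps)
      have g1: "gf h n = 2*h*(i-1)+3*h+j" using gfB[OF B(1) B(2) B(3)] B(4) by simp
      have g2: "gf h (Suc n) = 2*h*(i+1)"
      proof (cases "i+1 < h")
        case True then show ?thesis using gfA[OF True, of 0] sn by simp
      next
        case False
        then have "i+1 = h" using B by simp
        then show ?thesis using gfC[of h 0] sn by simp
      qed
      have lt: "gf h n < gf h (Suc n)" using g1 g2 ji B(2) by (simp add: algebra_simps)
      have "Suc n mod 3 \<noteq> 1 \<longrightarrow> gf h (Suc n) mod 3 = Suc (gf h n) mod 3"
      proof
        assume N: "Suc n mod 3 \<noteq> 1"
        have "(i+1) mod 3 = 0" using mod3_lemma2[OF N[unfolded sn]] .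
        then have "\<exists>q. i = 3*q+2" by presburger
        then obtain q where q: "i = 3*q+2" by blast
        have e1: "gf h (Suc n) = 3*(2*h*(q+1))" using g2 q by simp
        have e2: "Suc (gf h n) = 3*(6*kk*q + 5*kk + 5*q + 4)" using g1 q hk ji by (simp add: algebra_simps)
        show "gf h (Suc n) mod 3 = Suc (gf h n) mod 3" by (simp only: e1 e2 m30)
      qed
      with lt show ?thesis by blast
    qed
  qed
qed


lemma uniq_mono:
  fixes f g :: "nat \<Rightarrow> nat"
  assumes f: "strict_mono f" and g: "strict_mono g" and r: "range f = range g"
  shows "f n = g n"
proof (induction n rule: less_induct)
  case (less n)
  show ?case
  proof (rule ccontr)
    assume ne: "f n \<noteq> g n"
    show False
    proof (cases "f n < g n")
      case True
      have "f n \<in> range g" using r by auto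
      then obtain m where m: "f n = g m" by auto
      then have "g m < g n" using True by simp
      then have "m < n" using g by (simp add: strict_mono_less)
      then have "f m = g m" using less by simp
      then have "f m = f n" using m by simp
      then show False using f \<open>m < n\<close> by (simp add: strict_mono_eq)
    next
      case False
      then have lt: "g n < f n" using ne by simp
      have "g n \<in> range f" using r by auto
      then obtain m where m: "g n = f m" by auto
      then have "f m < f n" using lt by simp
      then have "m < n" using f by (simp add: strict_mono_less)
      then have "f m = g m" using less by simp
      then have "g m = g n" using m by simp
      then show False using g \<open>m < n\<close> by (simp add: strict_mono_eq)
    qed
  qed
qed

lemma gf_mono: "h mod 3 = 2 \<Longrightarrow> strict_mono (gf h)"
  using step by (simp add: strict_mono_Suc_iff)

lemma gf_range:
  assumes h: "h mod 3 = 2"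
  shows "range (gf h) = {x. inH h x}"
proof
  show "range (gf h) \<subseteq> {x. inH h x}"
  proof clarify
    fix n
    consider (C) "h*h \<le> n" | (A) i j where "i<h" "j\<le>i" "n = i*i+j"
      | (B) i j where "0<i" "i<h" "j<i" "n = i*i+i+1+j" using decomp[of h n] by blast
    then show "inH h (gf h n)"
    proof cases
      case C
      then have "gf h n = 2*h*h + (n - h*h)" unfolding gf_def by simp
      then show ?thesis unfolding inH_def by simp
    next
      case A
      then show ?thesis using gfA[OF A(1) A(2)] unfolding inH_def by blast
    next
      case B
      then show ?thesis using gfB[OF B(1) B(2) B(3)] unfolding inH_def by blast
    qed
  qed
next
  show "{x. inH h x} \<subseteq> range (gf h)"
  proof clarify
    fix x assume "inH h x"
    then consider (A) i j where "i<h" "j\<le>i" "x = 2*h*i+j"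
      | (B) i j where "0<i" "i<h" "j<i" "x = 2*h*(i-1)+3*h+j" | (C) "2*h*h \<le> x"
      unfolding inH_def by blast
    then show "x \<in> range (gf h)"
    proof cases
      case A then show ?thesis using gfA[OF A(1) A(2)] by (metis rangeI)
    next
      case B then show ?thesis using gfB[OF B(1) B(2) B(3)] by (metis rangeI)
    next
      case C
      have "gf h (h*h + (x - 2*h*h)) = x" using gfC[of h "x - 2*h*h"] C by simp
      then show ?thesis by (metis rangeI)
    qed
  qed
qed

lemma Aset: "A k i = {i * aa k .. i * aa k + i}"
  by (cases i) auto

lemma setplus_single: "x \<in> setplus X {c} \<longleftrightarrow> c \<le> x \<and> x - c \<in> X"
  unfolding setplus_def by force

lemma Bset: "B k (Suc j) = {j * aa k + cc k .. j * aa k + cc k + j}"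
  by (auto simp: setplus_single Aset)

lemma Hchar:
  fixes k :: nat
  defines "h \<equiv> 3*k+2"
  shows "x \<in> H11 k \<longleftrightarrow> inH h x"
proof -
  have aa: "aa k = 2*h" and cc: "cc k = 3*h" and tt: "tt k = h - 1"
    unfolding h_def aa_def cc_def tt_def by auto
  have hp: "h \<ge> 2" unfolding h_def by simp
  show ?thesis
  proof
    assume "x \<in> H11 k"
    then consider (AB) i where "i \<le> tt k" "x \<in> A k i \<or> x \<in> B k i" | (C) "x \<in> C k"
      unfolding H11_def by auto
    then show "inH h x"
    proof cases
      case AB
      then have ih: "i < h" using tt hp by simp
      from AB(2) show ?thesis
      proof
        assume "x \<in> A k i"
        then have "i*(2*h) \<le> x" "x \<le> i*(2*h) + i" by (auto simp: Aset aa)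
        then show ?thesis unfolding inH_def using ih
          by (intro disjI1 exI[of _ i] exI[of _ "x - 2*h*i"]) (auto simp: algebra_simps)
      next
        assume xb: "x \<in> B k i"
        then obtain p where p: "i = Suc p" by (cases i) auto
        with xb have "p*(2*h) + 3*h \<le> x" "x \<le> p*(2*h) + 3*h + p" by (auto simp del: B.simps simp add: Bset aa cc)
        then show ?thesis unfolding inH_def using ih p
          by (intro disjI2 disjI1 exI[of _ i] exI[of _ "x - 2*h*p - 3*h"]) (auto simp: algebra_simps)
      qed
    next
      case C
      then have "(h - 1 + 1) * (2*h) \<le> x" unfolding C_def tt aa by simp
      then show ?thesis unfolding inH_def using hp by (simp add: algebra_simps)
    qed
  next
    assume "inH h x"
    then consider (A) i j where "i<h" "j\<le>i" "x = 2*h*i+j"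
      | (B) i j where "0<i" "i<h" "j<i" "x = 2*h*(i-1)+3*h+j" | (C) "2*h*h \<le> x"
      unfolding inH_def by blast
    then show "x \<in> H11 k"
    proof cases
      case A
      then have "x \<in> A k i" by (simp add: Aset aa algebra_simps)
      moreover have "i \<in> {0..tt k}" using A tt by simp
      ultimately show ?thesis unfolding H11_def by blast
    next
      case B
      then obtain p where p: "i = Suc p" by (cases i) auto
      then have "x \<in> B k i" using B by (simp del: B.simps add: Bset aa cc algebra_simps)
      moreover have "i \<in> {0..tt k}" using B tt by simp
      ultimately show ?thesis unfolding H11_def by blast
    next
      case C
      have "(tt k + 1) * aa k = 2*h*h" using tt aa hp by (simp add: algebra_simps)
      then have "x \<in> C k" unfolding C_def using C by simp
      then show ?thesis unfolding H11_def by blast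
    qed
  qed
qed

theorem lemma4p11:
  fixes k :: nat
  assumes "k > 0"
  defines "a \<equiv> 6*k + 4"
  defines "t \<equiv> (a - 2) div 2"
  defines "b \<equiv> a + 1"
  defines "c \<equiv> a + a div 2"
  defines "S \<equiv> {a, b, c}"
  defines "G \<equiv> gen S"
  shows "(\<forall>x. x \<in> G \<longleftrightarrow> (\<exists>q r u. r \<le> q \<and> x = (q + u) * a + u * (a div 2) + r))
    \<and> G = H11 k
    \<and> (\<forall>i\<in>{0..t}. set_less (A k i) (B k i))
    \<and> (\<forall>i\<in>{0..t-1}. set_less (B k i) (A k (i + 1)))
    \<and> set_less (B k t) (C k)
    \<and> perm_ns 3 (H11 k)"
proof -
  define h where "h = 3*k+2"
  have hm: "h mod 3 = 2" unfolding h_def by presburger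
  have hp: "h \<ge> 5" unfolding h_def using assms(1) by simp
  have a2: "a = 2*h" and ad: "a div 2 = h" and b2: "b = 2*h+1" and c3: "c = 3*h" and t1: "t = h - 1"
    unfolding a_def b_def c_def t_def h_def by auto
  have aak: "aa k = a" unfolding aa_def a_def by simp
  have cck: "cc k = c" unfolding cc_def c_def aa_def a_def by simp
  have ttk: "tt k = t" unfolding tt_def t_def aa_def a_def by simp
  have P1: "x \<in> G \<longleftrightarrow> (\<exists>q r u. r \<le> q \<and> x = (q + u) * a + u * (a div 2) + r)" for x
  proof
    assume "x \<in> G"
    then obtain m n u where x: "x = m*a+n*b+u*c" unfolding G_def S_def gen3 by blast
    show "\<exists>q r u. r \<le> q \<and> x = (q + u) * a + u * (a div 2) + r"
      using x by (intro exI[of _ "m+n"] exI[of _ n] exI[of _ u]) (simp add: a2 b2 c3 algebra_simps)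
  next
    assume "\<exists>q r u. r \<le> q \<and> x = (q + u) * a + u * (a div 2) + r"
    then obtain q r u where r: "r \<le> q" and x: "x = (q + u) * a + u * (a div 2) + r" by blast
    have "x = (q-r)*a + r*b + u*c" using x r by (simp add: a2 b2 c3 algebra_simps)
    then show "x \<in> G" unfolding G_def S_def gen3 by blast
  qed
  have GH: "x \<in> G \<longleftrightarrow> inH h x" for x
    using P1[of x] qru_inH[of h x] hp by (simp add: a2 ad)
  have HH: "x \<in> H11 k \<longleftrightarrow> inH h x" for x using Hchar[of x k] unfolding h_def by simp
  have GeqH: "G = H11 k" using GH HH by blast
  have rng: "H11 k = range (gf h)" using gf_range[OF hm] HH by blast
  have O1: "\<forall>i\<in>{0..t}. set_less (A k i) (B k i)"
  proof
    fix i assume i: "i \<in> {0..t}"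
    show "set_less (A k i) (B k i)"
    proof (cases i)
      case 0 then show ?thesis by (simp add: set_less_def)
    next
      case (Suc p)
      have "p + 1 < h" using i Suc t1 hp by simp
      then show ?thesis unfolding set_less_def using Suc
        by (auto simp del: B.simps simp add: Aset Bset aak cck a2 c3 algebra_simps)
    qed
  qed
  have O2: "\<forall>i\<in>{0..t-1}. set_less (B k i) (A k (i + 1))"
  proof
    fix i assume i: "i \<in> {0..t-1}"
    show "set_less (B k i) (A k (i + 1))"
    proof (cases i)
      case 0 then show ?thesis by (simp add: set_less_def)
    next
      case (Suc p)
      have "p < h" using i Suc t1 hp by simp
      then show ?thesis unfolding set_less_def using Suc
        by (auto simp del: B.simps simp add: Aset Bset aak cck a2 c3 algebra_simps)
    qed
  qed
  have O3: "set_less (B k t) (C k)"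
  proof -
    define p where "p = h - 2"
    have p: "t = Suc p" "h = p + 2" unfolding p_def using t1 hp by auto
    have Bt: "B k t = {p * (2*h) + 3*h .. p * (2*h) + 3*h + p}"
      unfolding p(1) Bset aak cck a2 c3 by simp
    have Ct: "C k = {(p+2) * (2*h) ..}" unfolding C_def ttk aak a2 p(1) by simp
    have "p * (2*h) + 3*h + p < (p+2) * (2*h)" using p(2) by (simp add: algebra_simps)
    then show ?thesis unfolding set_less_def Bt Ct by auto
  qed
  have inf: "infinite (H11 k)"
    unfolding infinite_nat_iff_unbounded_le
  proof
    fix m
    have "m + 2*h*h \<in> H11 k" using HH[of "m + 2*h*h"] unfolding inH_def by simp
    then show "\<exists>n\<ge>m. n \<in> H11 k" by (intro exI[of _ "m + 2*h*h"]) simp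
  qed
  have el: "elem (H11 k) n = gf h n" for n
  proof -
    have "strict_mono (enumerate (H11 k))" "range (enumerate (H11 k)) = H11 k"
      using strict_mono_enumerate[OF inf] range_enumerate[OF inf] by auto
    then show ?thesis unfolding elem_def
      using uniq_mono[of "enumerate (H11 k)" "gf h"] gf_mono[OF hm] rng by simp
  qed
  have g1: "gf h 1 = 2*h" using gfA[of 1 h 0] hp by simp
  have g2': "gf h (1*1+1) = 2*h*1+1" by (rule gfA) (use hp in auto)
  have e112: "(1::nat)*1+1 = 2" by simp
  have g2: "gf h 2 = 2*h+1" using g2'[unfolded e112] by simp
  have g3': "gf h (1*1+1+1+0) = 2*h*(1-1)+3*h+0" by (rule gfB) (use hp in auto)
  have e3: "(1::nat)*1+1+1+0 = 3" by simp
  have g3: "gf h 3 = 3*h" using g3'[unfolded e3] by simp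
  have gens: "elem (H11 k) ` {1..3} = S"
  proof -
    have "{1..3::nat} = {1,2,3}" by auto
    then show ?thesis using el g1 g2 g3 unfolding S_def a2 b2 c3 by auto
  qed
  have ns: "numerical_semigroup (H11 k)"
    unfolding numerical_semigroup_def
  proof (intro conjI ballI)
    show "0 \<in> H11 k" using GeqH G_def gen.gen_zero by blast
  next
    fix x y assume "x \<in> H11 k" "y \<in> H11 k"
    then show "x + y \<in> H11 k" using gen_closed GeqH unfolding G_def by blast
  next
    have "UNIV - H11 k \<subseteq> {..<2*h*h}" using HH unfolding inH_def by auto
    then show "finite (UNIV - H11 k)" using finite_subset by blast
  qed
  have bij: "bij_betw (\<lambda>j. elem (H11 k) (m*3 + j) mod 3) {1..3} {..<3}" for m
  proof -
    define f where "f = (\<lambda>j. elem (H11 k) (m*3 + j) mod 3)"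
    define r where "r = gf h (m*3+1) mod 3"
    have s1: "gf h (Suc (m*3+1)) mod 3 = Suc (gf h (m*3+1)) mod 3"
    proof -
      have "Suc (m*3+1) mod 3 \<noteq> 1" by presburger
      then show ?thesis using step[OF hm, of "m*3+1"] by blast
    qed
    have s2: "gf h (Suc (m*3+2)) mod 3 = Suc (gf h (m*3+2)) mod 3"
    proof -
      have "Suc (m*3+2) mod 3 \<noteq> 1" by presburger
      then show ?thesis using step[OF hm, of "m*3+2"] by blast
    qed
    have f1: "f 1 = r" unfolding f_def r_def el by simp
    have f2: "f 2 = (r+1) mod 3" using s1 unfolding f_def r_def el by (simp add: mod_Suc_eq)
    have e33: "Suc (m*3+2) = m*3+3" by simp
    have "f 3 = Suc (gf h (m*3+2)) mod 3" using s2 unfolding f_def el e33 .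
    also have "\<dots> = Suc (gf h (m*3+2) mod 3) mod 3" by (rule mod_Suc_eq[symmetric])
    also have "gf h (m*3+2) mod 3 = (r+1) mod 3" using f2 unfolding f_def el .
    also have "Suc ((r+1) mod 3) mod 3 = (r+2) mod 3" by presburger
    finally have f3: "f 3 = (r+2) mod 3" .
    have r3: "r < 3" unfolding r_def by simp
    have I: "{1..3::nat} = {1,2,3}" by auto
    have J: "{..<3::nat} = {0,1,2}" by auto
    have im0: "f ` {1,2,3} = {f 1, f 2, f 3}" by simp
    have "r = 0 \<or> r = 1 \<or> r = 2" using r3 by auto
    then have img: "f ` {1,2,3} = {0,1,2}"
    proof (elim disjE)
      assume "r = 0" then show ?thesis using im0 f1 f2 f3 by auto
    next
      assume "r = 1" then show ?thesis using im0 f1 f2 f3 by auto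
    next
      assume "r = 2" then show ?thesis using im0 f1 f2 f3 by auto
    qed
    have "inj_on f {1,2,3}"
      using inj_on_iff_eq_card[of "{1,2,3::nat}" f] img by simp
    then have "bij_betw f {1,2,3} {0,1,2}" using img unfolding bij_betw_def by simp
    then show ?thesis unfolding f_def I J .
  qed
  have perm: "perm_ns 3 (H11 k)"
    unfolding perm_ns_def using ns gens GeqH bij G_def by simp
  show ?thesis using P1 GeqH O1 O2 O3 perm by blast
qed

end
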